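(* Let $X$ be a set and $d,\rho$ metrics on $X$ such that $d$ is quasisymmetric to $\rho$, and assume $(X,d)$ is uniformly shrinking. Then (1) $(X,\rho)$ is uniformly shrinking; (2) if a measure $\mu$ on $X$ satisfies $(\mathrm{VD})_d$, then it also satisfies $(\mathrm{VD})_\rho$.
   Context: $d$ is quasisymmetric to $\rho$ if there is a homeomorphism $\theta$ of $[0,\infty)$ with $\rho(x,y)/\rho(x,z)\le\theta(d(x,y)/d(x,z))$ for all $x\ne z$. A metric space $(X,d)$ is uniformly shrinking if there is $\alpha\in(0,1)$ such that for all $x\in X$ and $r>0$ with $B_d(x,r)\ne X$ and $B_d(x,r)\ne\{x\}$, one has $B_d(x,r)\setminus B_d(x,\alpha r)\ne\emptyset$ (open balls). $\mu$ satisfies $(\mathrm{VD})_d$ if there is $C>0$ with $\mu(B_d(x,2r))\le C\mu(B_d(x,r))$ for all $x\in X$, $r>0$. *)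

theory Defs
  imports "HOL-Analysis.Analysis" "HOL-Probability.Probability"
begin

definition quasisymmetric :: "'a set \<Rightarrow> ('a \<Rightarrow> 'a \<Rightarrow> real) \<Rightarrow> ('a \<Rightarrow> 'a \<Rightarrow> real) \<Rightarrow> bool" where
  "quasisymmetric X d \<rho> \<longleftrightarrow>
     (\<exists>\<theta> \<theta>'. homeomorphism {0..} {0..} \<theta> \<theta>' \<and>
        (\<forall>x\<in>X. \<forall>y\<in>X. \<forall>z\<in>X. x \<noteq> z \<longrightarrow> \<rho> x y / \<rho> x z \<le> \<theta> (d x y / d x z)))"

definition uniformly_shrinking :: "'a set \<Rightarrow> ('a \<Rightarrow> 'a \<Rightarrow> real) \<Rightarrow> bool" where
  "uniformly_shrinking X d \<longleftrightarrow>
     (\<exists>\<alpha>::real. 0 < \<alpha> \<and> \<alpha> < 1 \<and>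
        (\<forall>x\<in>X. \<forall>r>0. Metric_space.mball X d x r \<noteq> X \<and> Metric_space.mball X d x r \<noteq> {x} \<longrightarrow>
           Metric_space.mball X d x r - Metric_space.mball X d x (\<alpha> * r) \<noteq> {}))"

definition volume_doubling :: "'a set \<Rightarrow> ('a \<Rightarrow> 'a \<Rightarrow> real) \<Rightarrow> 'a measure \<Rightarrow> bool" where
  "volume_doubling X d \<mu> \<longleftrightarrow>
     (\<exists>C::real. C > 0 \<and>
        (\<forall>x\<in>X. \<forall>r>0. emeasure \<mu> (Metric_space.mball X d x (2 * r))
                         \<le> ennreal C * emeasure \<mu> (Metric_space.mball X d x r)))"

definition metric_borel_sets :: "'a set \<Rightarrow> ('a \<Rightarrow> 'a \<Rightarrow> real) \<Rightarrow> 'a set set" where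
  "metric_borel_sets X d = sigma_sets X {U. openin (Metric_space.mtopology X d) U}"

end

theory Submission imports Defs begin

lemma theta_zero:
  fixes \<theta> \<theta>' :: "real \<Rightarrow> real"
  assumes h: "homeomorphism {0..} {0..} \<theta> \<theta>'"
  shows "\<theta> 0 = 0"
proof (rule ccontr)
  assume ne: "\<theta> 0 \<noteq> 0"
  have inv1: "\<And>x. x \<ge> 0 \<Longrightarrow> \<theta>' (\<theta> x) = x" and inv2: "\<And>y. y \<ge> 0 \<Longrightarrow> \<theta> (\<theta>' y) = y"
    and img: "\<theta> ` {0..} = {0..}" and img': "\<theta>' ` {0..} = {0..}"
    and cont: "continuous_on {0..} \<theta>"
    using h unfolding homeomorphism_def by auto
  define a where "a = \<theta> 0"
  have "a \<in> {0..}" using img a_def by blast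
  then have a: "a > 0" using ne a_def by auto
  define b where "b = \<theta>' 0"
  have b0: "b \<ge> 0" using img' b_def by fastforce
  have tb: "\<theta> b = 0" using inv2 b_def by simp
  have bne: "b \<noteq> 0" using tb ne by auto
  define c where "c = \<theta>' (2*a)"
  have c0: "c \<ge> 0" using img' c_def a by fastforce
  have tc: "\<theta> c = 2*a" using inv2 c_def a by simp
  have inj: "\<And>p. p \<ge> 0 \<Longrightarrow> \<theta> p = a \<Longrightarrow> p = 0"
    using inv1 a_def by (metis order_refl)
  have cne: "c \<noteq> 0" using tc a a_def by auto
  show False
  proof (cases "c < b")
    case True
    have "continuous_on {c..b} \<theta>" by (rule continuous_on_subset[OF cont]) (use c0 in auto)
    then obtain p where "c \<le> p" "p \<le> b" "\<theta> p = a" using IVT2'[of \<theta> b a c] tb tc a True by auto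
    then show False using inj[of p] c0 cne by linarith
  next
    case False
    have "continuous_on {b..c} \<theta>" by (rule continuous_on_subset[OF cont]) (use b0 in auto)
    then obtain p where "b \<le> p" "p \<le> c" "\<theta> p = a" using IVT'[of \<theta> b a c] tb tc a False by auto
    then show False using inj[of p] b0 bne by linarith
  qed
qed

lemma theta_small:
  fixes \<theta> \<theta>' :: "real \<Rightarrow> real"
  assumes h: "homeomorphism {0..} {0..} \<theta> \<theta>'" and e: "e > 0"
  shows "\<exists>\<eta>>0. \<forall>t. 0 \<le> t \<and> t \<le> \<eta> \<longrightarrow> \<theta> t < e"
proof -
  have cont: "continuous_on {0..} \<theta>" using h unfolding homeomorphism_def by auto
  then obtain \<delta> where d: "\<delta> > 0" "\<forall>x'\<in>{0..}. dist x' 0 < \<delta> \<longrightarrow> dist (\<theta> x') (\<theta> 0) < e"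
    using e unfolding continuous_on_iff by (metis atLeast_iff order_refl)
  show ?thesis
  proof (intro exI[of _ "\<delta>/2"] conjI allI impI)
    fix t :: real assume "0 \<le> t \<and> t \<le> \<delta>/2"
    then have "dist (\<theta> t) (\<theta> 0) < e" using d by (auto simp: dist_real_def)
    then show "\<theta> t < e" using theta_zero[OF h] by (auto simp: dist_real_def)
  qed (use d in auto)
qed

lemma theta_bounded:
  fixes \<theta> \<theta>' :: "real \<Rightarrow> real"
  assumes h: "homeomorphism {0..} {0..} \<theta> \<theta>'"
  shows "\<exists>M>0. \<forall>t. 0 \<le> t \<and> t \<le> T \<longrightarrow> \<theta> t \<le> M"
proof -
  have cont: "continuous_on {0..T} \<theta>" using h unfolding homeomorphism_def
    by (auto intro: continuous_on_subset)
  have "bounded (\<theta> ` {0..T})"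
    by (rule compact_imp_bounded, rule compact_continuous_image[OF cont]) auto
  then obtain B where B: "\<forall>x\<in>\<theta> ` {0..T}. \<bar>x\<bar> \<le> B" unfolding bounded_real by auto
  show ?thesis
    by (rule exI[of _ "max B 1"]) (use B in force)
qed

theorem lemma6p1:
  fixes X :: "'a set" and d \<rho> :: "'a \<Rightarrow> 'a \<Rightarrow> real"
  assumes "Metric_space X d" and "Metric_space X \<rho>"
    and "quasisymmetric X d \<rho>"
    and "uniformly_shrinking X d"
  shows "uniformly_shrinking X \<rho> \<and>
         (\<forall>\<mu>::'a measure. space \<mu> = X \<and> sets \<mu> = metric_borel_sets X d \<longrightarrow>
            volume_doubling X d \<mu> \<longrightarrow> volume_doubling X \<rho> \<mu>)"
proof -
  interpret D: Metric_space X d by fact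
  interpret P: Metric_space X \<rho> by fact
  obtain \<theta> \<theta>' where h: "homeomorphism {0..} {0..} \<theta> \<theta>'"
    and qs: "\<forall>x\<in>X. \<forall>y\<in>X. \<forall>z\<in>X. x \<noteq> z \<longrightarrow> \<rho> x y / \<rho> x z \<le> \<theta> (d x y / d x z)"
    using assms(3) unfolding quasisymmetric_def by blast
  obtain \<eta> where eta: "\<eta> > 0" "\<forall>t. 0 \<le> t \<and> t \<le> \<eta> \<longrightarrow> \<theta> t < 1/2"
    using theta_small[OF h, of "1/2"] by auto
  have key: "\<eta> * d x u < d x w"
    if xuw: "x \<in> X" "u \<in> X" "w \<in> X" "u \<noteq> x" "\<rho> x u \<le> 2 * \<rho> x w" for x u w
  proof (rule ccontr)
    assume "\<not> \<eta> * d x u < d x w"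
    hence le: "d x w \<le> \<eta> * d x u" by simp
    have du: "d x u > 0" using xuw by auto
    have pu: "\<rho> x u > 0" using xuw by auto
    have "d x w / d x u \<le> \<eta>" using le du by (simp add: divide_le_eq mult.commute)
    moreover have "0 \<le> d x w / d x u" by simp
    ultimately have "\<theta> (d x w / d x u) < 1/2" using eta by auto
    moreover have "\<rho> x w / \<rho> x u \<le> \<theta> (d x w / d x u)" using qs xuw by auto
    ultimately have "\<rho> x w / \<rho> x u < 1/2" by linarith
    hence "\<rho> x w < \<rho> x u / 2" using pu by (simp add: divide_less_eq)
    thus False using xuw by linarith
  qed
  have below: "\<rho> x v < r"
    if "x \<in> X" "v \<in> X" "d x v < Inf (d x ` {w\<in>X. r \<le> \<rho> x w})" for x v r
  proof (rule ccontr)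
    assume "\<not> \<rho> x v < r"
    hence "d x v \<in> d x ` {w\<in>X. r \<le> \<rho> x w}" using that by auto
    moreover have "bdd_below (d x ` {w\<in>X. r \<le> \<rho> x w})" by (rule bdd_belowI[of _ 0]) auto
    ultimately have "Inf (d x ` {w\<in>X. r \<le> \<rho> x w}) \<le> d x v" by (rule cInf_lower)
    thus False using that by linarith
  qed
  have Rprops: "\<exists>R. R \<ge> \<eta> * d x u \<and> (\<forall>v\<in>X. d x v < R \<longrightarrow> \<rho> x v < r) \<and>
      (\<exists>w\<in>X. r \<le> \<rho> x w \<and> R \<le> d x w \<and> d x w < 2 * R)"
    if hyp: "x \<in> X" "u \<in> X" "u \<noteq> x" "\<rho> x u < 2 * r" "W \<noteq> {}" "W = {w\<in>X. r \<le> \<rho> x w}" for x u r W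
  proof -
    define R where "R = Inf (d x ` W)"
    have bdd: "bdd_below (d x ` W)" by (rule bdd_belowI[of _ 0]) auto
    have lo: "\<forall>w\<in>W. \<eta> * d x u < d x w"
      using key[of x u] that by force
    have R1: "R \<ge> \<eta> * d x u" unfolding R_def
      by (rule cInf_greatest) (use that lo in \<open>auto simp: less_imp_le\<close>)
    have "d x u > 0" using that by auto
    hence Rpos: "R > 0" using R1 eta by (smt (verit) mult_pos_pos)
    have "Inf (d x ` W) < 2 * R" using Rpos R_def by simp
    then obtain w where w: "w \<in> W" "d x w < 2 * R"
      using cInf_less_iff[OF _ bdd] hyp(5) by auto
    have "R \<le> d x w" unfolding R_def by (rule cInf_lower) (use w bdd in auto)
    moreover have "\<forall>v\<in>X. d x v < R \<longrightarrow> \<rho> x v < r" using below[of x _ r] that R_def by auto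
    ultimately show ?thesis using R1 w that by auto
  qed
  have part1: "uniformly_shrinking X \<rho>"
  proof -
    obtain \<alpha> where al: "0 < \<alpha>" "\<alpha> < 1" and shr: "\<forall>x\<in>X. \<forall>r>0. D.mball x r \<noteq> X \<and> D.mball x r \<noteq> {x} \<longrightarrow>
           D.mball x r - D.mball x (\<alpha> * r) \<noteq> {}"
      using assms(4) unfolding uniformly_shrinking_def by blast
    obtain M where M: "M > 0" "\<forall>t. 0 \<le> t \<and> t \<le> 2/\<alpha> \<longrightarrow> \<theta> t \<le> M"
      using theta_bounded[OF h] by blast
    define M1 where "M1 = max M 1"
    have M1: "M1 \<ge> 1" "\<forall>t. 0 \<le> t \<and> t \<le> 2/\<alpha> \<longrightarrow> \<theta> t \<le> M1"
      using M unfolding M1_def by force+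
    define \<beta> where "\<beta> = 1 / (2 * M1)"
    have b: "0 < \<beta>" "\<beta> < 1" using M1 unfolding \<beta>_def by auto
    have goal: "P.mball x r - P.mball x (\<beta> * r) \<noteq> {}"
      if x: "x \<in> X" and r: "r > 0" and n1: "P.mball x r \<noteq> X" and n2: "P.mball x r \<noteq> {x}" for x r
    proof -
      obtain w0 where w0: "w0 \<in> X" "r \<le> \<rho> x w0" using n1 P.mball_subset_mspace x by force
      have xin: "x \<in> P.mball x r" using x r by simp
      obtain z where z: "z \<in> P.mball x r" "z \<noteq> x" using n2 xin by blast
      have zX: "z \<in> X" and zr: "\<rho> x z < r" using z by auto
      obtain R w where R: "R \<ge> \<eta> * d x z" "\<forall>v\<in>X. d x v < R \<longrightarrow> \<rho> x v < r"
        and w: "w \<in> X" "r \<le> \<rho> x w" "R \<le> d x w" "d x w < 2 * R"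
        using Rprops[of x z r "{w\<in>X. r \<le> \<rho> x w}"] x zX z(2) zr r w0 by auto
      have dz: "d x z > 0" using x zX z(2) by auto
      have Rpos: "R > 0" using R(1) dz eta by (smt (verit) mult_pos_pos)
      have hlp: "y \<in> P.mball x r - P.mball x (\<beta> * r)"
        if y: "y \<in> X" "y \<noteq> x" "\<rho> x y < r" "d x w \<le> (2/\<alpha>) * d x y" for y
      proof -
        have dy: "d x y > 0" using y x by auto
        have py: "\<rho> x y > 0" using y x by auto
        have t: "0 \<le> d x w / d x y" "d x w / d x y \<le> 2/\<alpha>" using y(4) dy by (auto simp: divide_le_eq)
        have "\<rho> x w / \<rho> x y \<le> \<theta> (d x w / d x y)" using qs x y w by auto
        also have "\<dots> \<le> M1" using M1 t by auto
        finally have "\<rho> x w \<le> M1 * \<rho> x y" using py by (simp add: divide_le_eq)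
        hence "r \<le> M1 * \<rho> x y" using w by linarith
        hence "\<beta> * r \<le> \<rho> x y / 2" unfolding \<beta>_def using M1 r by (simp add: field_simps)
        hence "\<not> \<rho> x y < \<beta> * r" using py by linarith
        thus ?thesis using y x by auto
      qed
      have a2: "2 \<le> 2/\<alpha>" using al by (simp add: field_simps)
      show ?thesis
      proof (cases "D.mball x R = {x}")
        case True
        have "z \<notin> D.mball x R" using True z(2) by auto
        hence "R \<le> d x z" using x zX by auto
        moreover have "2 * d x z \<le> (2/\<alpha>) * d x z" using a2 dz by (intro mult_right_mono) auto
        ultimately have "d x w \<le> (2/\<alpha>) * d x z" using w by linarith
        then show ?thesis using hlp[of z] zX z(2) zr by blast
      next
        case False
        have "w \<notin> D.mball x R" using w by auto
        hence "D.mball x R \<noteq> X" using w by blast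
        then obtain y where y: "y \<in> D.mball x R" "y \<notin> D.mball x (\<alpha>*R)"
          using shr x Rpos False by blast
        have yX: "y \<in> X" "d x y < R" "\<alpha> * R \<le> d x y" using y x by auto
        have yx: "y \<noteq> x" using yX al Rpos x by (smt (verit) mult_pos_pos D.mdist_zero)
        have yr: "\<rho> x y < r" using R yX by auto
        have "(2/\<alpha>) * (\<alpha> * R) \<le> (2/\<alpha>) * d x y" using yX al by (intro mult_left_mono) auto
        moreover have "(2/\<alpha>) * (\<alpha> * R) = 2 * R" using al by simp
        ultimately have "d x w \<le> (2/\<alpha>) * d x y" using w by linarith
        then show ?thesis using hlp[of y] yX yx yr by blast
      qed
    qed
    show ?thesis unfolding uniformly_shrinking_def
      using b goal by blast
  qed
  have part2: "volume_doubling X \<rho> \<mu>"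
    if sp: "space \<mu> = X" and sets: "sets \<mu> = metric_borel_sets X d" and vd: "volume_doubling X d \<mu>"
    for \<mu> :: "'a measure"
  proof -
    obtain C where C: "C > 0" "\<forall>x\<in>X. \<forall>r>0. emeasure \<mu> (D.mball x (2 * r))
                         \<le> ennreal C * emeasure \<mu> (D.mball x r)"
      using vd unfolding volume_doubling_def by blast
    define C1 where "C1 = max C 1"
    have C1: "C1 \<ge> 1" unfolding C1_def by simp
    have dbl: "emeasure \<mu> (D.mball x (2 * r)) \<le> ennreal C1 * emeasure \<mu> (D.mball x r)"
      if "x \<in> X" "r > 0" for x r
    proof -
      have "emeasure \<mu> (D.mball x (2 * r)) \<le> ennreal C * emeasure \<mu> (D.mball x r)"
        using C that by blast
      also have "\<dots> \<le> ennreal C1 * emeasure \<mu> (D.mball x r)"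
        unfolding C1_def by (intro mult_right_mono) auto
      finally show ?thesis .
    qed
    have iter: "emeasure \<mu> (D.mball x (2^n * r)) \<le> ennreal (C1^n) * emeasure \<mu> (D.mball x r)"
      if "x \<in> X" "r > 0" for x r n
    proof (induction n)
      case 0
      then show ?case by simp
    next
      case (Suc n)
      have "emeasure \<mu> (D.mball x (2^Suc n * r)) = emeasure \<mu> (D.mball x (2 * (2^n * r)))"
        by (simp add: mult.assoc)
      also have "\<dots> \<le> ennreal C1 * emeasure \<mu> (D.mball x (2^n * r))"
        using dbl that by simp
      also have "\<dots> \<le> ennreal C1 * (ennreal (C1^n) * emeasure \<mu> (D.mball x r))"
        by (intro mult_left_mono Suc) auto
      also have "\<dots> = ennreal (C1^Suc n) * emeasure \<mu> (D.mball x r)"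
        using C1 by (simp add: ennreal_mult mult.assoc)
      finally show ?case .
    qed
    have meas: "U \<in> sets \<mu>" if "openin D.mtopology U" for U
      using that unfolding sets metric_borel_sets_def by (auto intro: sigma_sets.Basic)
    have Dmeas: "D.mball x r \<in> sets \<mu>" for x r by (rule meas) simp
    have Pmeas: "P.mball x r \<in> sets \<mu>" for x r
    proof (rule meas, unfold D.openin_mtopology, intro conjI allI impI)
      show "P.mball x r \<subseteq> X" by (rule P.mball_subset_mspace)
      fix y assume y: "y \<in> P.mball x r"
      hence yX: "y \<in> X" and xX: "x \<in> X" and yr: "\<rho> x y < r" by auto
      show "\<exists>e>0. D.mball y e \<subseteq> P.mball x r"
      proof (cases "\<exists>x'\<in>X. x' \<noteq> y")
        case False
        hence "D.mball y 1 \<subseteq> P.mball x r" using y by auto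
        thus ?thesis by (intro exI[of _ 1]) auto
      next
        case True
        then obtain x' where x': "x' \<in> X" "x' \<noteq> y" by blast
        have px: "\<rho> y x' > 0" and dx: "d y x' > 0" using x' yX by auto
        obtain \<eta>' where e': "\<eta>' > 0" "\<forall>t. 0 \<le> t \<and> t \<le> \<eta>' \<longrightarrow> \<theta> t < (r - \<rho> x y) / \<rho> y x'"
          using theta_small[OF h, of "(r - \<rho> x y) / \<rho> y x'"] yr px by auto
        have "D.mball y (\<eta>' * d y x') \<subseteq> P.mball x r"
        proof
          fix u assume u: "u \<in> D.mball y (\<eta>' * d y x')"
          hence uX: "u \<in> X" and du: "d y u < \<eta>' * d y x'" by auto
          have t: "0 \<le> d y u / d y x'" "d y u / d y x' \<le> \<eta>'" using du dx
            by (auto simp: divide_le_eq less_imp_le)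
          have "\<rho> y u / \<rho> y x' \<le> \<theta> (d y u / d y x')" using qs yX uX x' by auto
          also have "\<dots> < (r - \<rho> x y) / \<rho> y x'" using e' t by auto
          finally have "\<rho> y u < r - \<rho> x y" using px by (simp add: divide_less_cancel)
          moreover have "\<rho> x u \<le> \<rho> x y + \<rho> y u" using P.triangle xX yX uX by auto
          ultimately show "u \<in> P.mball x r" using xX uX by auto
        qed
        thus ?thesis using e' dx by (intro exI[of _ "\<eta>' * d y x'"]) auto
      qed
    qed
    obtain n :: nat where n: "2/\<eta> < 2^n" using real_arch_pow[of 2 "2/\<eta>"] by auto
    define C' where "C' = C1^n"
    have C': "C' \<ge> 1" unfolding C'_def using C1 by (simp add: one_le_power)
    have goal: "emeasure \<mu> (P.mball x (2 * r)) \<le> ennreal C' * emeasure \<mu> (P.mball x r)"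
      if x: "x \<in> X" and r: "r > 0" for x r
    proof (cases "P.mball x (2 * r) \<subseteq> P.mball x r")
      case True
      have "emeasure \<mu> (P.mball x (2 * r)) \<le> emeasure \<mu> (P.mball x r)"
        by (rule emeasure_mono[OF True Pmeas])
      also have "\<dots> = ennreal 1 * emeasure \<mu> (P.mball x r)" by simp
      also have "\<dots> \<le> ennreal C' * emeasure \<mu> (P.mball x r)"
        using C' by (intro mult_right_mono) auto
      finally show ?thesis .
    next
      case False
      then obtain u where "u \<in> P.mball x (2 * r)" "u \<notin> P.mball x r" by blast
      hence u: "u \<in> X" "\<rho> x u < 2 * r" "\<not> \<rho> x u < r" using x by auto
      have ux: "u \<noteq> x" using u x r by auto
      obtain R w where R: "R \<ge> \<eta> * d x u" "\<forall>v\<in>X. d x v < R \<longrightarrow> \<rho> x v < r"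
        and w: "w \<in> X" "r \<le> \<rho> x w" "R \<le> d x w" "d x w < 2 * R"
        using Rprops[of x u r "{w\<in>X. r \<le> \<rho> x w}"] x u ux by force
      have du: "d x u > 0" using x u ux by auto
      have Rpos: "R > 0" using R(1) du eta by (smt (verit) mult_pos_pos)
      have sub1: "P.mball x (2 * r) \<subseteq> D.mball x (2^n * R)"
      proof
        fix v assume v: "v \<in> P.mball x (2 * r)"
        hence vX: "v \<in> X" and vr: "\<rho> x v < 2 * r" by auto
        have "(2/\<eta>) * R < 2^n * R" using n Rpos by (intro mult_strict_right_mono) auto
        moreover have "d x v \<le> (2/\<eta>) * R"
        proof (cases "v = x")
          case True thus ?thesis using x eta Rpos by simp
        next
          case False
          have "\<eta> * d x v < d x w" using key[of x v w] x vX w False vr by auto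
          hence "\<eta> * d x v < 2 * R" using w by linarith
          thus ?thesis using eta by (simp add: field_simps)
        qed
        ultimately show "v \<in> D.mball x (2^n * R)" using x vX by auto
      qed
      have sub2: "D.mball x R \<subseteq> P.mball x r" using R x by auto
      have "emeasure \<mu> (P.mball x (2 * r)) \<le> emeasure \<mu> (D.mball x (2^n * R))"
        by (rule emeasure_mono[OF sub1 Dmeas])
      also have "\<dots> \<le> ennreal C' * emeasure \<mu> (D.mball x R)"
        unfolding C'_def by (rule iter[OF x Rpos])
      also have "\<dots> \<le> ennreal C' * emeasure \<mu> (P.mball x r)"
        by (intro mult_left_mono emeasure_mono[OF sub2 Pmeas]) auto
      finally show ?thesis .
    qed
    show ?thesis unfolding volume_doubling_def
      using C' goal by (intro exI[of _ C']) auto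
  qed
  show ?thesis using part1 part2 by blast
qed

end
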